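(* Fix $d\ge2$. For finite sets $S\subseteq\mathbb{Z}^d$, $p_{\mathbb{Z}^d}(S)\ge \frac{(1+o(1))|S|}{\ln|S|}$, where $o(1)\to0$ as $|S|\to\infty$.
   Context: $p_{\mathbb{Z}^d}(S)$ is the largest number of colors for which there is a coloring of $\mathbb{Z}^d$ such that every translate $\mathbf{n}+S=\{\mathbf{n}+\mathbf{s}:\mathbf{s}\in S\}$, $\mathbf{n}\in\mathbb{Z}^d$, contains an element of each color. (Known result usable: for finite $S\subseteq\mathbb{Z}$, $p_{\mathbb{Z}}(S)\ge\frac{(1+o(1))|S|}{\ln|S|}$, due to Alon–Kříž–Nešetřil and Harris–Srinivasan.) *)

theory Defs
  imports "HOL-Analysis.Analysis"
begin

definition polychromatic :: "('a::plus \<Rightarrow> nat) \<Rightarrow> nat \<Rightarrow> 'a set \<Rightarrow> bool" where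
  "polychromatic c k S \<longleftrightarrow> (\<forall>n. \<forall>i<k. \<exists>s\<in>S. c (n + s) = i)"

definition p_Zd :: "(int ^ 'd) set \<Rightarrow> nat" where
  "p_Zd S = (GREATEST k. \<exists>c. polychromatic c k S)"

end

theory Submission
  imports Defs "HOL-Library.FuncSet" "HOL-Real_Asymp.Real_Asymp"
begin


definition detby :: "('v \<Rightarrow> nat) set \<Rightarrow> 'v set \<Rightarrow> ('v \<Rightarrow> nat) set \<Rightarrow> bool" where
  "detby \<Omega> U A \<longleftrightarrow> (\<forall>f\<in>\<Omega>. \<forall>g\<in>\<Omega>. (\<forall>v\<in>U. f v = g v) \<longrightarrow> (f\<in>A \<longleftrightarrow> g\<in>A))"

definition mrg :: "'v set \<Rightarrow> ('v \<Rightarrow> nat) \<Rightarrow> ('v \<Rightarrow> nat) \<Rightarrow> 'v \<Rightarrow> nat" where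
  "mrg U f g = (\<lambda>v. if v \<in> U then f v else g v)"

lemma mrg_PiE: "f \<in> PiE V (\<lambda>_. C) \<Longrightarrow> g \<in> PiE V (\<lambda>_. C) \<Longrightarrow> mrg U f g \<in> PiE V (\<lambda>_. C)"
  unfolding mrg_def PiE_def extensional_def by auto

lemma indep_card:
  assumes \<Omega>: "\<Omega> = PiE V (\<lambda>_. C)" and AB: "A \<subseteq> \<Omega>" "B \<subseteq> \<Omega>"
    and dA: "detby \<Omega> U A" and dB: "detby \<Omega> W B" and disj: "U \<inter> W = {}"
  shows "card (A \<inter> B) * card \<Omega> = card A * card B"
proof -
  define \<Phi> where "\<Phi> = (\<lambda>(f,g). (mrg U f g, mrg U g f))"
  have inv: "\<Phi> (\<Phi> x) = x" for x
    by (cases x) (auto simp: \<Phi>_def mrg_def)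
  have 1: "\<Phi> ` (A \<times> B) \<subseteq> (A \<inter> B) \<times> \<Omega>"
  proof
    fix y assume "y \<in> \<Phi> ` (A \<times> B)"
    then obtain f g where fg: "f \<in> A" "g \<in> B" "y = (mrg U f g, mrg U g f)"
      by (auto simp: \<Phi>_def)
    have fO: "f \<in> \<Omega>" "g \<in> \<Omega>" using fg AB by auto
    have m1: "mrg U f g \<in> \<Omega>" "mrg U g f \<in> \<Omega>" using fO by (metis \<Omega> mrg_PiE)+
    have "mrg U f g \<in> A" using dA fO m1 fg unfolding detby_def by (metis mrg_def)
    moreover have "mrg U f g \<in> B"
    proof -
      have "\<forall>v\<in>W. mrg U f g v = g v" using disj by (auto simp: mrg_def)
      then show ?thesis using dB fO m1 fg unfolding detby_def by metis
    qed
    ultimately show "y \<in> (A \<inter> B) \<times> \<Omega>" using fg m1 by auto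
  qed
  have 2: "\<Phi> ` ((A \<inter> B) \<times> \<Omega>) \<subseteq> A \<times> B"
  proof
    fix y assume "y \<in> \<Phi> ` ((A \<inter> B) \<times> \<Omega>)"
    then obtain f g where fg: "f \<in> A" "f \<in> B" "g \<in> \<Omega>" "y = (mrg U f g, mrg U g f)"
      by (auto simp: \<Phi>_def)
    have fO: "f \<in> \<Omega>" using fg AB by auto
    have m1: "mrg U f g \<in> \<Omega>" "mrg U g f \<in> \<Omega>" using fO fg by (metis \<Omega> mrg_PiE)+
    have "mrg U f g \<in> A" using dA fO m1 fg unfolding detby_def by (metis mrg_def)
    moreover have "mrg U g f \<in> B"
    proof -
      have "\<forall>v\<in>W. mrg U g f v = f v" using disj by (auto simp: mrg_def)
      then show ?thesis using dB fO m1 fg unfolding detby_def by metis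
    qed
    ultimately show "y \<in> A \<times> B" using fg by auto
  qed
  have "bij_betw \<Phi> (A \<times> B) ((A \<inter> B) \<times> \<Omega>)"
    by (rule bij_betw_byWitness[where f'=\<Phi>]) (use inv 1 2 in auto)
  then have "card (A \<times> B) = card ((A \<inter> B) \<times> \<Omega>)" by (rule bij_betw_same_card)
  then show ?thesis by (simp add: card_cartesian_product)
qed

lemma detby_B:
  assumes "\<forall>j\<in>J. detby \<Omega> (U j) (A j)"
  shows "detby \<Omega> (\<Union>(U ` J)) {f\<in>\<Omega>. \<forall>j\<in>J. f \<notin> A j}"
  unfolding detby_def
proof (intro ballI impI)
  fix f g assume fg: "f \<in> \<Omega>" "g \<in> \<Omega>" and eq: "\<forall>v\<in>\<Union>(U ` J). f v = g v"
  have "\<forall>j\<in>J. f \<in> A j \<longleftrightarrow> g \<in> A j"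
  proof
    fix j assume j: "j \<in> J"
    have "\<forall>v\<in>U j. f v = g v" using eq j by auto
    then show "f \<in> A j \<longleftrightarrow> g \<in> A j" using assms j fg unfolding detby_def by blast
  qed
  then show "f \<in> {f \<in> \<Omega>. \<forall>j\<in>J. f \<notin> A j} \<longleftrightarrow> g \<in> {f \<in> \<Omega>. \<forall>j\<in>J. f \<notin> A j}"
    using fg by auto
qed

lemma lll:
  fixes V :: "'v set" and I :: "'i set" and A :: "'i \<Rightarrow> ('v \<Rightarrow> nat) set"
    and U :: "'i \<Rightarrow> 'v set" and p :: real and D :: nat and q :: nat
  defines "\<Omega> \<equiv> PiE V (\<lambda>_. {..<q})"
  assumes finV: "finite V" and q: "q > 0" and finI: "finite I"
    and AO: "\<forall>i\<in>I. A i \<subseteq> \<Omega>" and det: "\<forall>i\<in>I. detby \<Omega> (U i) (A i)"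
    and pr: "\<forall>i\<in>I. real (card (A i)) \<le> p * real (card \<Omega>)"
    and dep: "\<forall>i\<in>I. card {j\<in>I. j \<noteq> i \<and> U i \<inter> U j \<noteq> {}} \<le> D"
    and p0: "0 \<le> p" and pD: "4 * p * D \<le> 1" and D1: "1 \<le> D"
  shows "\<exists>f\<in>\<Omega>. \<forall>i\<in>I. f \<notin> A i"
proof -
  define B where "B J = {f\<in>\<Omega>. \<forall>j\<in>J. f \<notin> A j}" for J
  have finO: "finite \<Omega>" unfolding \<Omega>_def using finV by (intro finite_PiE) auto
  have cardO: "card \<Omega> > 0"
  proof -
    have "\<Omega> \<noteq> {}" unfolding \<Omega>_def using q by (auto simp: PiE_eq_empty_iff)
    then show ?thesis using finO by (simp add: card_gt_0_iff)
  qed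
  have "4*p*1 \<le> 4*p*real D" by (rule mult_left_mono) (use D1 p0 in auto)
  then have p4: "p \<le> 1/4" using pD by linarith
  have \<Omega>eq: "\<Omega> = PiE V (\<lambda>_. {..<q})" by (simp add: \<Omega>_def)
  have BO: "B J \<subseteq> \<Omega>" for J unfolding B_def by auto
  have detB: "J \<subseteq> I \<Longrightarrow> detby \<Omega> (\<Union>(U ` J)) (B J)" for J
    unfolding B_def by (rule detby_B) (use det in blast)
  have indep: "real (card (A i \<inter> B J)) \<le> p * card (B J)"
    if "i \<in> I" "J \<subseteq> I" "\<forall>j\<in>J. U i \<inter> U j = {}" for i J
  proof -
    have "card (A i \<inter> B J) * card \<Omega> = card (A i) * card (B J)"
    proof (rule indep_card[OF \<Omega>eq _ BO])
      show "A i \<subseteq> \<Omega>" using AO that by auto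
      show "detby \<Omega> (U i) (A i)" using det that by auto
      show "detby \<Omega> (\<Union>(U ` J)) (B J)" using detB that by auto
      show "U i \<inter> \<Union>(U ` J) = {}" using that by auto
    qed
    then have "real (card (A i \<inter> B J)) * card \<Omega> = real (card (A i)) * card (B J)"
      by (metis of_nat_mult)
    also have "\<dots> \<le> p * card \<Omega> * card (B J)"
      using pr that by (intro mult_right_mono) auto
    finally have "real (card (A i \<inter> B J)) * card \<Omega> \<le> (p * card (B J)) * card \<Omega>"
      by (simp add: algebra_simps)
    then show ?thesis using cardO by (simp add: mult_le_cancel_right)
  qed
  have main: "\<forall>J. J \<subseteq> I \<longrightarrow> card J = N \<longrightarrow> card (B J) > 0 \<and>
       (\<forall>i\<in>I - J. real (card (A i \<inter> B J)) \<le> 2 * p * card (B J))" for N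
  proof (induction N rule: less_induct)
    case (less N)
    show ?case
    proof (intro allI impI conjI)
      fix J assume JI: "J \<subseteq> I" and cJ: "card J = N"
      have finJ: "finite J" using JI finI finite_subset by blast
      show pos: "card (B J) > 0"
      proof (cases "J = {}")
        case True
        then show ?thesis using cardO by (simp add: B_def)
      next
        case False
        then obtain j where j: "j \<in> J" by auto
        define J' where "J' = J - {j}"
        have cJ': "card J' < N" using j finJ cJ unfolding J'_def
          by (metis card_Diff1_less)
        have IH: "card (B J') > 0" "real (card (A j \<inter> B J')) \<le> 2 * p * card (B J')"
          using less[OF cJ', rule_format, of J'] JI j unfolding J'_def by auto
        have eq: "B J = B J' - (A j \<inter> B J')" using j unfolding B_def J'_def by auto
        have finB: "finite (B J')" using BO finO finite_subset by blast
        have le: "card (A j \<inter> B J') \<le> card (B J')" by (rule card_mono) (use finB in auto)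
        have "real (card (B J)) = card (B J') - real (card (A j \<inter> B J'))"
          unfolding eq using finB le by (subst card_Diff_subset) (auto simp: of_nat_diff)
        also have "\<dots> \<ge> card (B J') - 2 * p * card (B J')" using IH by linarith
        finally have "real (card (B J)) \<ge> (1 - 2 * p) * card (B J')" by (simp add: algebra_simps)
        moreover have "(1 - 2 * p) * card (B J') > 0" using p4 IH by (intro mult_pos_pos) auto
        ultimately show ?thesis by linarith
      qed
      show "\<forall>i\<in>I - J. real (card (A i \<inter> B J)) \<le> 2 * p * card (B J)"
      proof
        fix i assume i: "i \<in> I - J"
        define J1 where "J1 = {j\<in>J. U i \<inter> U j \<noteq> {}}"
        define J2 where "J2 = J - J1"
        have J2I: "J2 \<subseteq> I" using JI unfolding J2_def by auto
        have BJ_sub: "B J \<subseteq> B J2" unfolding B_def J2_def by auto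
        have finB: "finite (B J2)" using BO finO finite_subset by blast
        have "card (A i \<inter> B J) \<le> card (A i \<inter> B J2)"
          using BJ_sub finB by (intro card_mono) auto
        also have "real \<dots> \<le> p * card (B J2)"
          by (rule indep) (use i J2I in \<open>auto simp: J2_def J1_def\<close>)
        finally have 1: "real (card (A i \<inter> B J)) \<le> p * card (B J2)" by simp
        show "real (card (A i \<inter> B J)) \<le> 2 * p * card (B J)"
        proof (cases "J1 = {}")
          case True
          then have "J2 = J" unfolding J2_def by auto
          moreover have "0 \<le> p * card (B J)" using p0 by simp
          ultimately show ?thesis using 1 by simp
        next
          case False
          have finJ1: "finite J1" using finJ unfolding J1_def by auto
          have "J2 \<subset> J" using False unfolding J2_def J1_def by auto
          then have cJ2: "card J2 < N" using finJ cJ by (metis psubset_card_mono)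
          have IH: "\<forall>j\<in>J1. real (card (A j \<inter> B J2)) \<le> 2 * p * card (B J2)"
            using less[OF cJ2, rule_format, of J2] J2I JI unfolding J2_def J1_def by auto
          have cJ1: "card J1 \<le> D"
          proof -
            have "J1 \<subseteq> {j\<in>I. j \<noteq> i \<and> U i \<inter> U j \<noteq> {}}" using i JI unfolding J1_def by auto
            then have "card J1 \<le> card {j\<in>I. j \<noteq> i \<and> U i \<inter> U j \<noteq> {}}"
              using finI by (intro card_mono) auto
            then show ?thesis using dep i by force
          qed
          have eq: "B J = B J2 - (\<Union>j\<in>J1. A j \<inter> B J2)"
            unfolding B_def J2_def using JI by (auto simp: J1_def)
          have "card (\<Union>j\<in>J1. A j \<inter> B J2) \<le> (\<Sum>j\<in>J1. card (A j \<inter> B J2))"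
            by (rule card_UN_le[OF finJ1])
          then have "real (card (\<Union>j\<in>J1. A j \<inter> B J2)) \<le> (\<Sum>j\<in>J1. real (card (A j \<inter> B J2)))"
            by (metis of_nat_le_iff of_nat_sum)
          also have "\<dots> \<le> (\<Sum>j\<in>J1. 2 * p * card (B J2))" using IH by (intro sum_mono) auto
          also have "\<dots> = card J1 * (2 * p * card (B J2))" by simp
          also have "\<dots> \<le> D * (2 * p * card (B J2))"
            using cJ1 p0 by (intro mult_right_mono) auto
          also have "\<dots> \<le> 1/2 * card (B J2)"
          proof -
            have "D * (2 * p) \<le> 1/2" using pD by (simp add: algebra_simps)
            then show ?thesis by (metis mult.assoc mult_right_mono of_nat_0_le_iff)
          qed
          finally have U: "real (card (\<Union>j\<in>J1. A j \<inter> B J2)) \<le> 1/2 * card (B J2)" .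
          have le: "card (\<Union>j\<in>J1. A j \<inter> B J2) \<le> card (B J2)" by (rule card_mono) (use finB in auto)
          have "real (card (B J)) = card (B J2) - real (card (\<Union>j\<in>J1. A j \<inter> B J2))"
            unfolding eq using finB le by (subst card_Diff_subset) (auto simp: of_nat_diff)
          then have "real (card (B J)) \<ge> 1/2 * card (B J2)" using U by linarith
          then have "p * (1/2 * card (B J2)) \<le> p * card (B J)" by (rule mult_left_mono) (use p0 in auto)
          then show ?thesis using 1 by linarith
        qed
      qed
    qed
  qed
  have "card (B I) > 0" using main[of "card I"] by auto
  then obtain f where "f \<in> B I" by (metis card_gt_0_iff ex_in_conv)
  then show ?thesis unfolding B_def by auto
qed



lemma prod_if_card:
  assumes "finite V" "E \<subseteq> V"
  shows "(\<Prod>v\<in>V. if v \<in> E then a else b) = a ^ card E * b ^ (card V - card E)"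
proof -
  have "(\<Prod>v\<in>V. if v \<in> E then a else b) = (\<Prod>v\<in>V \<inter> {x. x \<in> E}. a) * (\<Prod>v\<in>V \<inter> - {x. x \<in> E}. b)"
    by (rule prod.If_cases) (use assms in auto)
  also have "V \<inter> - {x. x \<in> E} = V - E" by auto
  also have "V \<inter> {x. x \<in> E} = V \<inter> E" by auto
  also have "V \<inter> E = E" using assms by auto
  also have "card (V - E) = card V - card E" using assms by (simp add: card_Diff_subset finite_subset)
  then have "(\<Prod>v\<in>V - E. b) = b ^ (card V - card E)" by simp
  finally show ?thesis by simp
qed

lemma card_miss:
  assumes "finite V" "W \<subseteq> V" "j < q"
  shows "card {f\<in>PiE V (\<lambda>_. {..<q::nat}). \<forall>v\<in>W. f v \<noteq> j} = (q-1) ^ card W * q ^ (card V - card W)"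
proof -
  have "{f\<in>PiE V (\<lambda>_. {..<q}). \<forall>v\<in>W. f v \<noteq> j} = PiE V (\<lambda>v. if v \<in> W then {..<q} - {j} else {..<q})"
    using assms(2) by (auto simp: PiE_iff extensional_def split: if_splits)
  moreover have "card (PiE V (\<lambda>v. if v \<in> W then {..<q} - {j} else {..<q})) =
      (\<Prod>v\<in>V. if v \<in> W then q - 1 else q)"
    using assms by (subst card_PiE) (auto intro!: prod.cong)
  ultimately show ?thesis using prod_if_card[OF assms(1,2), of "q-1" q] by simp
qed

lemma card_Omega:
  assumes "finite V" shows "card (PiE V (\<lambda>_. {..<q::nat})) = q ^ card V"
  using assms by (simp add: card_PiE)

lemma miss_prob:
  assumes "finite V" "W \<subseteq> V" "j < q"
  shows "real (card {f\<in>PiE V (\<lambda>_. {..<q::nat}). \<forall>v\<in>W. f v \<noteq> j}) \<le>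
           exp (- real (card W) / q) * real (card (PiE V (\<lambda>_. {..<q})))"
proof -
  have q: "q > 0" using assms by auto
  have cW: "card W \<le> card V" using assms by (simp add: card_mono)
  have "real (card {f\<in>PiE V (\<lambda>_. {..<q::nat}). \<forall>v\<in>W. f v \<noteq> j}) = real (q-1) ^ card W * real q ^ (card V - card W)"
    by (simp add: card_miss[OF assms])
  also have "real (q-1) = (1 - 1/q) * q" using q by (simp add: field_simps of_nat_diff)
  also have "((1 - 1/q) * q) ^ card W * real q ^ (card V - card W) = (1 - 1/q) ^ card W * real q ^ card V"
    using cW by (simp add: power_mult_distrib power_add[symmetric])
  also have "(1 - 1/q) ^ card W \<le> exp (- 1 / q) ^ card W"
  proof (rule power_mono)
    show "1 - 1 / real q \<le> exp (- 1 / real q)" using exp_ge_add_one_self[of "-1/q"] by simp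
    show "0 \<le> 1 - 1 / real q" using q by (simp add: field_simps)
  qed
  also have "exp (- 1 / q) ^ card W = exp (- real (card W) / q)"
    by (simp add: exp_of_nat_mult[symmetric])
  finally show ?thesis using card_Omega[OF assms(1)] by (simp add: mult_right_mono)
qed

lemma chernoff_count:
  fixes z :: real
  assumes finV: "finite V" and EV: "E \<subseteq> V" and g: "g < T" and z: "0 < z" "z \<le> 1"
  shows "real (card {f\<in>PiE V (\<lambda>_. {..<T::nat}). card {v\<in>E. f v = g} < m}) * z ^ m \<le>
         (real T - 1 + z) ^ card E * real T ^ (card V - card E)"
proof -
  define \<Omega> where "\<Omega> = PiE V (\<lambda>_. {..<T::nat})"
  define X where "X f = card {v\<in>E. f v = g}" for f :: "'a \<Rightarrow> nat"
  define h where "h v c = (if v \<in> E \<and> c = g then z else 1)" for v c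
  have finO: "finite \<Omega>" unfolding \<Omega>_def using finV by (intro finite_PiE) auto
  have zX: "z ^ X f = (\<Prod>v\<in>V. h v (f v))" for f
  proof -
    have "(\<Prod>v\<in>V. h v (f v)) = (\<Prod>v\<in>V. if v \<in> E \<and> f v = g then z else 1)" unfolding h_def by simp
    also have "\<dots> = (\<Prod>v\<in>{v\<in>V. v \<in> E \<and> f v = g}. z)" by (rule prod.inter_filter[OF finV, symmetric])
    also have "{v\<in>V. v \<in> E \<and> f v = g} = {v\<in>E. f v = g}" using EV by auto
    finally show ?thesis unfolding X_def by simp
  qed
  have sumh: "(\<Sum>c\<in>{..<T}. h v c) = (if v \<in> E then real T - 1 + z else real T)" for v
  proof (cases "v \<in> E")
    case True
    have "(\<Sum>c\<in>{..<T}. h v c) = h v g + (\<Sum>c\<in>{..<T} - {g}. h v c)"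
      by (rule sum.remove) (use g in auto)
    also have "(\<Sum>c\<in>{..<T} - {g}. h v c) = (\<Sum>c\<in>{..<T} - {g}. 1)"
      by (rule sum.cong) (auto simp: h_def)
    also have "\<dots> = real T - 1" using g by (simp add: of_nat_diff)
    finally show ?thesis using True by (simp add: h_def)
  next
    case False
    then show ?thesis by (simp add: h_def)
  qed
  have "(\<Sum>f\<in>\<Omega>. z ^ X f) = (\<Sum>f\<in>\<Omega>. \<Prod>v\<in>V. h v (f v))" using zX by simp
  also have "\<dots> = (\<Prod>v\<in>V. \<Sum>c\<in>{..<T}. h v c)"
    unfolding \<Omega>_def by (rule prod_sum_PiE[symmetric]) (use finV in auto)
  also have "\<dots> = (\<Prod>v\<in>V. if v \<in> E then real T - 1 + z else real T)" using sumh by simp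
  also have "\<dots> = (real T - 1 + z) ^ card E * real T ^ (card V - card E)"
    by (rule prod_if_card[OF finV EV])
  finally have S: "(\<Sum>f\<in>\<Omega>. z ^ X f) = (real T - 1 + z) ^ card E * real T ^ (card V - card E)" .
  define F where "F = {f\<in>\<Omega>. X f < m}"
  have "real (card F) * z ^ m = (\<Sum>f\<in>F. z ^ m)" by simp
  also have "\<dots> \<le> (\<Sum>f\<in>F. z ^ X f)"
    by (rule sum_mono) (use z in \<open>auto simp: F_def intro!: power_decreasing\<close>)
  also have "\<dots> \<le> (\<Sum>f\<in>\<Omega>. z ^ X f)"
    by (rule sum_mono2) (use finO z in \<open>auto simp: F_def\<close>)
  finally show ?thesis using S unfolding F_def X_def \<Omega>_def by simp
qed

lemma deg_count:
  assumes finI: "finite I" and EV: "\<forall>i\<in>I. E i \<subseteq> V"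
    and deg: "\<forall>v\<in>V. card {i\<in>I. v \<in> E i} \<le> n" and X: "X \<subseteq> V" "finite X"
  shows "card (\<Union>v\<in>X. {i\<in>I. v \<in> E i}) \<le> card X * n"
proof -
  have "card (\<Union>v\<in>X. {i\<in>I. v \<in> E i}) \<le> (\<Sum>v\<in>X. card {i\<in>I. v \<in> E i})"
    by (rule card_UN_le[OF X(2)])
  also have "\<dots> \<le> (\<Sum>v\<in>X. n)" by (rule sum_mono) (use deg X in auto)
  finally show ?thesis by simp
qed

lemma stage1:
  fixes E :: "'i \<Rightarrow> 'v set" and z p1 :: real
  assumes finV: "finite V" and finI: "finite I" and EV: "\<forall>i\<in>I. E i \<subseteq> V"
    and cE: "\<forall>i\<in>I. card (E i) = n"
    and deg: "\<forall>v\<in>V. card {i\<in>I. v \<in> E i} \<le> n"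
    and T: "T > 0" and z: "0 < z" "z \<le> 1"
    and p1: "real T * ((real T - 1 + z) / T) ^ n / z ^ m \<le> p1"
    and cond: "4 * p1 * real (n * n) \<le> 1" and n1: "1 \<le> n"
  shows "\<exists>\<sigma>\<in>PiE V (\<lambda>_. {..<T}). \<forall>i\<in>I. \<forall>g<T. m \<le> card {v\<in>E i. \<sigma> v = g}"
proof -
  define \<Omega> where "\<Omega> = PiE V (\<lambda>_. {..<T})"
  define F where "F i g = {f\<in>\<Omega>. card {v\<in>E i. f v = g} < m}" for i g
  define A where "A i = (\<Union>g<T. F i g)" for i
  have "real T \<ge> 1" using T by simp
  then have Tz: "real T - 1 + z > 0" using z by linarith
  have p0: "0 \<le> p1"
  proof -
    have "0 \<le> real T * ((real T - 1 + z) / T) ^ n / z ^ m" using Tz z by simp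
    then show ?thesis using p1 by linarith
  qed
  have "\<exists>f\<in>\<Omega>. \<forall>i\<in>I. f \<notin> A i"
    unfolding \<Omega>_def
  proof (rule lll[where U=E and p=p1 and D="n*n"])
    show "finite V" "0 < T" "finite I" "0 \<le> p1" "1 \<le> n * n" using finV T finI p0 n1 by auto
    show "4 * p1 * real (n * n) \<le> 1" by (rule cond)
    show "\<forall>i\<in>I. A i \<subseteq> V \<rightarrow>\<^sub>E {..<T}" unfolding A_def F_def \<Omega>_def by auto
    show "\<forall>i\<in>I. detby (V \<rightarrow>\<^sub>E {..<T}) (E i) (A i)"
    proof
      fix i assume i: "i \<in> I"
      show "detby (V \<rightarrow>\<^sub>E {..<T}) (E i) (A i)" unfolding detby_def
      proof (intro ballI impI)
        fix f g assume fg: "f \<in> V \<rightarrow>\<^sub>E {..<T}" "g \<in> V \<rightarrow>\<^sub>E {..<T}" and eq: "\<forall>v\<in>E i. f v = g v"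
        have "\<And>c. {v\<in>E i. f v = c} = {v\<in>E i. g v = c}" using eq by auto
        then show "f \<in> A i \<longleftrightarrow> g \<in> A i" using fg unfolding A_def F_def \<Omega>_def by auto
      qed
    qed
    show "\<forall>i\<in>I. real (card (A i)) \<le> p1 * real (card (V \<rightarrow>\<^sub>E {..<T}))"
    proof
      fix i assume i: "i \<in> I"
      have EVi: "E i \<subseteq> V" and cEi: "card (E i) = n" using EV cE i by auto
      have nV: "n \<le> card V" using EVi cEi finV by (metis card_mono)
      have bnd: "real (card (F i g)) \<le> (real T - 1 + z) ^ n * real T ^ (card V - n) / z ^ m" if g: "g < T" for g
      proof -
        have "real (card (F i g)) * z ^ m \<le> (real T - 1 + z) ^ n * real T ^ (card V - n)"
          using chernoff_count[OF finV EVi g z, of m] cEi unfolding F_def \<Omega>_def by simp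
        then show ?thesis using z by (simp add: field_simps)
      qed
      have "card (A i) \<le> (\<Sum>g<T. card (F i g))" unfolding A_def by (rule card_UN_le) auto
      then have "real (card (A i)) \<le> (\<Sum>g<T. real (card (F i g)))" by (metis of_nat_le_iff of_nat_sum)
      also have "\<dots> \<le> (\<Sum>g<T. (real T - 1 + z) ^ n * real T ^ (card V - n) / z ^ m)"
        by (rule sum_mono) (use bnd in auto)
      also have "\<dots> = real T * ((real T - 1 + z) / T) ^ n / z ^ m * real T ^ card V"
      proof -
        have "real T ^ card V = real T ^ n * real T ^ (card V - n)" using nV
          by (metis le_add_diff_inverse power_add)
        then show ?thesis using T by (simp add: field_simps power_divide)
      qed
      also have "\<dots> \<le> p1 * real T ^ card V" using p1 by (intro mult_right_mono) auto
      finally show "real (card (A i)) \<le> p1 * real (card (V \<rightarrow>\<^sub>E {..<T}))"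
        using card_Omega[OF finV, of T] by simp
    qed
    show "\<forall>i\<in>I. card {j \<in> I. j \<noteq> i \<and> E i \<inter> E j \<noteq> {}} \<le> n * n"
    proof
      fix i assume i: "i \<in> I"
      have EVi: "E i \<subseteq> V" and cEi: "card (E i) = n" using EV cE i by auto
      have finE: "finite (E i)" using EVi finV finite_subset by blast
      have "{j \<in> I. j \<noteq> i \<and> E i \<inter> E j \<noteq> {}} \<subseteq> (\<Union>v\<in>E i. {j\<in>I. v \<in> E j})" by auto
      then have "card {j \<in> I. j \<noteq> i \<and> E i \<inter> E j \<noteq> {}} \<le> card (\<Union>v\<in>E i. {j\<in>I. v \<in> E j})"
        using finI finE by (intro card_mono) auto
      also have "\<dots> \<le> card (E i) * n" by (rule deg_count[OF finI EV deg EVi finE])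
      finally show "card {j \<in> I. j \<noteq> i \<and> E i \<inter> E j \<noteq> {}} \<le> n * n" using cEi by simp
    qed
  qed
  then obtain \<sigma> where \<sigma>: "\<sigma> \<in> \<Omega>" "\<forall>i\<in>I. \<sigma> \<notin> A i" by blast
  have "\<forall>i\<in>I. \<forall>g<T. m \<le> card {v\<in>E i. \<sigma> v = g}"
  proof (intro ballI allI impI)
    fix i g assume "i \<in> I" "g < T"
    then have "\<sigma> \<notin> F i g" using \<sigma> unfolding A_def by auto
    then show "m \<le> card {v\<in>E i. \<sigma> v = g}" using \<sigma>(1) unfolding F_def by auto
  qed
  then show ?thesis using \<sigma>(1) unfolding \<Omega>_def by blast
qed

lemma stage2:
  fixes E :: "'i \<Rightarrow> 'v set" and W :: "'i \<Rightarrow> nat \<Rightarrow> 'v set" and p2 :: real and \<sigma> :: "'v \<Rightarrow> nat"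
  assumes finV: "finite V" and finI: "finite I" and EV: "\<forall>i\<in>I. E i \<subseteq> V"
    and deg: "\<forall>v\<in>V. card {i\<in>I. v \<in> E i} \<le> n"
    and W: "\<forall>i\<in>I. \<forall>g<T. W i g \<subseteq> E i \<and> (\<forall>v\<in>W i g. \<sigma> v = g) \<and> card (W i g) = m"
    and l: "l > 0" and p2: "exp (- real m / l) \<le> p2"
    and cond: "4 * p2 * real (m * n * l) \<le> 1" and D1: "1 \<le> m * n * l"
  shows "\<exists>\<tau>\<in>PiE V (\<lambda>_. {..<l}). \<forall>i\<in>I. \<forall>g<T. \<forall>j<l. \<exists>v\<in>W i g. \<tau> v = j"
proof -
  define \<Omega> where "\<Omega> = PiE V (\<lambda>_. {..<l})"
  define Idx where "Idx = I \<times> {..<T} \<times> {..<l}"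
  define U where "U x = W (fst x) (fst (snd x))" for x :: "'i \<times> nat \<times> nat"
  define A where "A x = {f\<in>\<Omega>. \<forall>v\<in>U x. f v \<noteq> snd (snd x)}" for x
  have UV: "U x \<subseteq> V" "card (U x) = m" if "x \<in> Idx" for x
    using that W EV unfolding U_def Idx_def by (auto simp: subset_iff)
  have "\<exists>f\<in>\<Omega>. \<forall>x\<in>Idx. f \<notin> A x"
    unfolding \<Omega>_def
  proof (rule lll[where U=U and p=p2 and D="m*n*l"])
    show "finite V" "0 < l" "finite Idx" "0 \<le> p2" "1 \<le> m * n * l"
      using finV l finI p2 D1 unfolding Idx_def by (auto intro: order.trans[OF exp_ge_zero])
    show "4 * p2 * real (m * n * l) \<le> 1" by (rule cond)
    show "\<forall>x\<in>Idx. A x \<subseteq> V \<rightarrow>\<^sub>E {..<l}" unfolding A_def \<Omega>_def by auto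
    show "\<forall>x\<in>Idx. detby (V \<rightarrow>\<^sub>E {..<l}) (U x) (A x)"
      unfolding detby_def A_def \<Omega>_def by auto
    show "\<forall>x\<in>Idx. real (card (A x)) \<le> p2 * real (card (V \<rightarrow>\<^sub>E {..<l}))"
    proof
      fix x assume x: "x \<in> Idx"
      have j: "snd (snd x) < l" using x unfolding Idx_def by auto
      have "real (card (A x)) \<le> exp (- real (card (U x)) / l) * real (card (V \<rightarrow>\<^sub>E {..<l}))"
        unfolding A_def \<Omega>_def by (rule miss_prob[OF finV UV(1)[OF x] j])
      also have "\<dots> \<le> p2 * real (card (V \<rightarrow>\<^sub>E {..<l}))"
        using p2 UV(2)[OF x] by (intro mult_right_mono) auto
      finally show "real (card (A x)) \<le> p2 * real (card (V \<rightarrow>\<^sub>E {..<l}))" .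
    qed
    show "\<forall>x\<in>Idx. card {y \<in> Idx. y \<noteq> x \<and> U x \<inter> U y \<noteq> {}} \<le> m * n * l"
    proof
      fix x assume x: "x \<in> Idx"
      have finU: "finite (U x)" using UV(1)[OF x] finV finite_subset by blast
      have sub: "{y \<in> Idx. y \<noteq> x \<and> U x \<inter> U y \<noteq> {}} \<subseteq>
          (\<Union>v\<in>U x. {i\<in>I. v \<in> E i} \<times> {\<sigma> v} \<times> {..<l})"
      proof
        fix y assume y: "y \<in> {y \<in> Idx. y \<noteq> x \<and> U x \<inter> U y \<noteq> {}}"
        then obtain v where v: "v \<in> U x" "v \<in> U y" by auto
        obtain i g j where yy: "y = (i, g, j)" by (cases y) auto
        have iI: "i \<in> I" "g < T" "j < l" using y yy unfolding Idx_def by auto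
        have "v \<in> W i g" using v yy unfolding U_def by auto
        then have "v \<in> E i" "\<sigma> v = g" using W iI by auto
        then show "y \<in> (\<Union>v\<in>U x. {i\<in>I. v \<in> E i} \<times> {\<sigma> v} \<times> {..<l})"
          using v iI yy by auto
      qed
      have "card {y \<in> Idx. y \<noteq> x \<and> U x \<inter> U y \<noteq> {}} \<le> card (\<Union>v\<in>U x. {i\<in>I. v \<in> E i} \<times> {\<sigma> v} \<times> {..<l})"
        by (rule card_mono[OF _ sub]) (use finU finI in auto)
      also have "\<dots> \<le> (\<Sum>v\<in>U x. card ({i\<in>I. v \<in> E i} \<times> {\<sigma> v} \<times> {..<l}))"
        by (rule card_UN_le[OF finU])
      also have "\<dots> \<le> (\<Sum>v\<in>U x. n * l)"
      proof (rule sum_mono)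
        fix v assume v: "v \<in> U x"
        have "card {i\<in>I. v \<in> E i} \<le> n" using deg v UV(1)[OF x] by auto
        then show "card ({i\<in>I. v \<in> E i} \<times> {\<sigma> v} \<times> {..<l}) \<le> n * l"
          by (simp add: card_cartesian_product)
      qed
      also have "\<dots> = m * n * l" using UV(2)[OF x] by simp
      finally show "card {y \<in> Idx. y \<noteq> x \<and> U x \<inter> U y \<noteq> {}} \<le> m * n * l" .
    qed
  qed
  then obtain \<tau> where \<tau>: "\<tau> \<in> \<Omega>" "\<forall>x\<in>Idx. \<tau> \<notin> A x" by blast
  have "\<forall>i\<in>I. \<forall>g<T. \<forall>j<l. \<exists>v\<in>W i g. \<tau> v = j"
  proof (intro ballI allI impI)
    fix i g j assume "i \<in> I" "g < T" "j < l"
    then have "\<tau> \<notin> A (i, g, j)" using \<tau> unfolding Idx_def by auto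
    then show "\<exists>v\<in>W i g. \<tau> v = j" using \<tau>(1) unfolding A_def U_def by auto
  qed
  then show ?thesis using \<tau>(1) unfolding \<Omega>_def by blast
qed



lemma analysis:
  fixes n T m l :: nat and lam eps L Q :: real
  assumes n2: "n \<ge> 2" and lam: "lam = ln n" and eps: "eps = lam powr (-1/4)"
    and L: "L = lam ^ 3" and Q: "Q = lam + 8 * ln lam"
    and T: "T = nat \<lfloor>n / L\<rfloor>" and m: "m = nat \<lfloor>(1 - eps) * (n / T)\<rfloor>"
    and l: "l = nat \<lfloor>((1 - eps) * (n / T) - 1) / Q\<rfloor>"
    and E1: "2 \<le> n / L" and E2: "eps \<le> 1/2"
    and E3: "4 * real n ^ 3 * exp (- (L * eps\<^sup>2 / 8)) \<le> 1"
    and E4: "3 \<le> lam" and E5: "Q \<le> (1 - eps) * L - 1"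
  shows "T > 0" "l > 0" "m \<ge> 1" "0 < 1 - eps/4" "1 - eps/4 \<le> 1"
    "4 * (real T * ((real T - 1 + (1 - eps/4)) / T) ^ n / (1 - eps/4) ^ m) * real (n * n) \<le> 1"
    "4 * exp (- real m / l) * real (m * n * l) \<le> 1"
    "real n / lam * (((1 - eps) - 1 / L) * lam / Q - lam / L) \<le> real (T * l)"
proof -
  have npos: "real n > 0" using n2 by simp
  have lampos: "lam > 0" using E4 by simp
  have epspos: "eps > 0" using lampos eps by simp
  have Lpos: "L > 0" using lampos L by simp
  have lnlam: "ln lam \<ge> 0" using E4 by simp
  have Qge: "Q \<ge> lam" using Q lnlam by simp
  have Qpos: "Q > 0" using Qge lampos by simp
  define x where "x = real n / L"
  have Tle: "real T \<le> x" using E1 unfolding T x_def by simp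
  have Tge: "real T \<ge> x - 1" using E1 unfolding T x_def by linarith
  have Tpos: "T > 0" using Tge E1 x_def by simp
  then show "T > 0" .
  have TpR: "real T > 0" using Tpos by simp
  define mu where "mu = real n / T"
  have Tmu: "real T * mu = n" using TpR unfolding mu_def by simp
  have muL: "mu \<ge> L"
  proof -
    have "real n / x \<le> real n / T" using Tle TpR npos by (intro divide_left_mono) auto
    moreover have "real n / x = L" using Lpos npos unfolding x_def by simp
    ultimately show ?thesis unfolding mu_def by simp
  qed
  have mu2L: "mu \<le> 2 * L"
  proof -
    have x2: "x / 2 \<le> real T" using Tge E1 x_def by linarith
    have xp: "x / 2 > 0" using E1 x_def by simp
    have "0 < real T * (x / 2)" using TpR xp by (rule mult_pos_pos)
    with x2 have "real n / T \<le> real n / (x / 2)"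
      using npos by (intro divide_left_mono) auto
    moreover have "real n / (x / 2) = 2 * L" using Lpos npos unfolding x_def by simp
    ultimately show ?thesis unfolding mu_def by simp
  qed
  have mupos: "mu > 0" using muL Lpos by simp
  have e1: "0 \<le> 1 - eps" using E2 by simp
  have mle: "real m \<le> (1 - eps) * mu" using m e1 mupos unfolding mu_def by simp
  have mge: "real m \<ge> (1 - eps) * mu - 1" using m e1 mupos unfolding mu_def by linarith
  define y where "y = ((1 - eps) * mu - 1) / Q"
  have yge1: "y \<ge> 1"
  proof -
    have "(1 - eps) * L \<le> (1 - eps) * mu" using muL e1 by (simp add: mult_left_mono)
    then have "Q \<le> (1 - eps) * mu - 1" using E5 by linarith
    then show ?thesis unfolding y_def using Qpos by simp
  qed
  have lle: "real l \<le> y" using l yge1 unfolding y_def mu_def by simp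
  have lge: "real l \<ge> y - 1" using l yge1 unfolding y_def mu_def by linarith
  have lpos: "l > 0" using lge yge1 l unfolding y_def mu_def by linarith
  then show "l > 0" .
  have Qy: "Q * y = (1 - eps) * mu - 1" unfolding y_def using Qpos by simp
  have "Q * real l \<le> Q * y" using lle Qpos by (intro mult_left_mono) auto
  then have mQl: "real m \<ge> Q * real l" using mge Qy by linarith
  have "real l \<ge> 1" using lpos by simp
  then have "Q * 1 \<le> Q * real l" using Qpos by (intro mult_left_mono) auto
  then have m1: "real m \<ge> 1" using mQl Qge E4 by linarith
  then show "m \<ge> 1" by simp
  show z1: "0 < 1 - eps/4" "1 - eps/4 \<le> 1" using E2 epspos by auto
  define z where "z = 1 - eps/4"
  have zpos: "z > 0" using z1 z_def by simp
  have A1: "((real T - 1 + z) / T) ^ n \<le> exp (- eps * mu / 4)"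
  proof -
    have b: "(real T - 1 + z) / T = 1 - eps / (4 * T)" using TpR unfolding z_def by (simp add: field_simps)
    have b0: "0 \<le> 1 - eps / (4 * T)"
    proof -
      have "eps / (4 * T) \<le> eps / 4" using TpR epspos Tpos by (intro divide_left_mono) auto
      then show ?thesis using E2 by simp
    qed
    have "(1 - eps / (4 * T)) ^ n \<le> exp (- (eps / (4 * T))) ^ n"
      by (rule power_mono) (use exp_ge_add_one_self[of "- (eps / (4 * T))"] b0 in auto)
    also have "\<dots> = exp (- eps * mu / 4)"
      unfolding mu_def by (simp add: exp_of_nat_mult[symmetric] field_simps)
    finally show ?thesis using b by simp
  qed
  have A2: "1 / z ^ m \<le> exp ((1 - eps) * mu * (eps / 4 + eps\<^sup>2 / 8))"
  proof -
    have lnz: "ln z \<ge> - (eps/4) - 2 * (eps/4)\<^sup>2" unfolding z_def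
      by (rule ln_one_minus_pos_lower_bound) (use epspos E2 in auto)
    have c0: "0 \<le> eps / 4 + eps\<^sup>2 / 8" using epspos by simp
    have "z ^ m = exp (real m * ln z)" using zpos by (simp add: exp_of_nat_mult)
    also have "real m * ln z \<ge> - (real m * (eps / 4 + eps\<^sup>2 / 8))"
    proof -
      have "- (eps/4) - 2 * (eps/4)\<^sup>2 = - (eps / 4 + eps\<^sup>2 / 8)" by (simp add: power2_eq_square)
      then have "real m * ln z \<ge> real m * (- (eps / 4 + eps\<^sup>2 / 8))"
        using lnz by (intro mult_left_mono) auto
      then show ?thesis by (simp add: algebra_simps)
    qed
    then have "exp (real m * ln z) \<ge> exp (- (real m * (eps / 4 + eps\<^sup>2 / 8)))" by simp
    moreover have "real m * (eps / 4 + eps\<^sup>2 / 8) \<le> (1 - eps) * mu * (eps / 4 + eps\<^sup>2 / 8)"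
      using mle c0 by (intro mult_right_mono) auto
    ultimately have "- ((1 - eps) * mu * (eps / 4 + eps\<^sup>2 / 8)) \<le> real m * ln z"
      using \<open>real m * ln z \<ge> _\<close> by linarith
    then have "z ^ m \<ge> exp (- ((1 - eps) * mu * (eps / 4 + eps\<^sup>2 / 8)))"
      using \<open>z ^ m = _\<close> by simp
    then have "1 / z ^ m \<le> 1 / exp (- ((1 - eps) * mu * (eps / 4 + eps\<^sup>2 / 8)))"
      using zpos by (intro divide_left_mono) auto
    then show ?thesis by (simp add: exp_minus field_simps)
  qed
  have A3: "- eps * mu / 4 + (1 - eps) * mu * (eps / 4 + eps\<^sup>2 / 8) \<le> - (L * eps\<^sup>2 / 8)"
  proof -
    have "- eps * mu / 4 + (1 - eps) * mu * (eps / 4 + eps\<^sup>2 / 8) = - mu * eps\<^sup>2 / 8 - mu * eps^3 / 8"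
      by (simp add: field_simps power2_eq_square power3_eq_cube)
    also have "\<dots> \<le> - mu * eps\<^sup>2 / 8" using mupos epspos by simp
    also have "\<dots> \<le> - (L * eps\<^sup>2 / 8)" using muL epspos by (simp add: mult_right_mono)
    finally show ?thesis .
  qed
  have "real T * ((real T - 1 + z) / T) ^ n / z ^ m = real T * (((real T - 1 + z) / T) ^ n * (1 / z ^ m))"
    by simp
  also have "\<dots> \<le> real T * (exp (- eps * mu / 4) * exp ((1 - eps) * mu * (eps / 4 + eps\<^sup>2 / 8)))"
    using A1 A2 TpR zpos by (intro mult_left_mono mult_mono) auto
  also have "\<dots> = real T * exp (- eps * mu / 4 + (1 - eps) * mu * (eps / 4 + eps\<^sup>2 / 8))"
    by (simp add: exp_add[symmetric])
  also have "\<dots> \<le> real n * exp (- (L * eps\<^sup>2 / 8))"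
  proof (rule mult_mono)
    show "real T \<le> real n"
    proof -
      have "lam ^ 3 \<ge> 3 ^ 3" using E4 by (rule power_mono) simp
      then have L1: "L \<ge> 1" unfolding L by simp
      have "real n / L \<le> real n / 1" using L1 npos by (intro divide_left_mono) auto
      then have "x \<le> real n" unfolding x_def by simp
      then show ?thesis using Tle by simp
    qed
  qed (use A3 in auto)
  finally have P1: "real T * ((real T - 1 + z) / T) ^ n / z ^ m \<le> real n * exp (- (L * eps\<^sup>2 / 8))" .
  have "4 * (real T * ((real T - 1 + z) / T) ^ n / z ^ m) * real (n * n) \<le> 4 * (real n * exp (- (L * eps\<^sup>2 / 8))) * real (n * n)"
    using P1 by (intro mult_right_mono mult_left_mono) auto
  also have "\<dots> = 4 * real n ^ 3 * exp (- (L * eps\<^sup>2 / 8))" by (simp add: power3_eq_cube)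
  finally show "4 * (real T * ((real T - 1 + (1 - eps/4)) / T) ^ n / (1 - eps/4) ^ m) * real (n * n) \<le> 1"
    using E3 unfolding z_def by linarith
  have lR: "real l > 0" using lpos by simp
  have "real m / l \<ge> Q" using mQl lR by (simp add: field_simps)
  then have "exp (- real m / l) \<le> exp (- Q)" by simp
  also have "exp (- Q) = 1 / (real n * lam ^ 8)"
  proof -
    have "exp (- Q) = exp (- lam) * exp (- (8 * ln lam))" unfolding Q by (simp add: exp_add[symmetric])
    also have "exp (- lam) = 1 / real n" unfolding lam using npos by (simp add: exp_minus inverse_eq_divide)
    also have "exp (- (8 * ln lam)) = 1 / lam ^ 8"
    proof -
      have "exp (8 * ln lam) = lam ^ 8" using exp_of_nat_mult[of 8 "ln lam"] lampos by simp
      then show ?thesis by (simp add: exp_minus inverse_eq_divide)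
    qed
    finally show ?thesis by simp
  qed
  finally have p2: "exp (- real m / l) \<le> 1 / (real n * lam ^ 8)" .
  have "(1 - eps) * mu = mu - eps * mu" by (simp add: algebra_simps)
  moreover have "eps * mu \<ge> 0" using epspos mupos by simp
  ultimately have mb: "real m \<le> 2 * L" using mle mu2L by linarith
  have lb: "real l \<le> 2 * L / lam"
  proof -
    have "y \<le> (1 - eps) * mu / Q" unfolding y_def using Qpos by (simp add: divide_right_mono)
    also have "\<dots> \<le> mu / Q" using e1 E2 mupos Qpos epspos by (intro divide_right_mono) auto
    also have "\<dots> \<le> mu / lam" using Qge lampos mupos by (intro divide_left_mono) auto
    also have "\<dots> \<le> 2 * L / lam" using mu2L lampos by (intro divide_right_mono) auto
    finally show ?thesis using lle by simp
  qed
  have "4 * exp (- real m / l) * real (m * n * l) \<le> 4 * (1 / (real n * lam ^ 8)) * real (m * n * l)"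
    using p2 by (intro mult_right_mono mult_left_mono) auto
  also have "\<dots> = 4 * real m * real l / lam ^ 8" using npos by (simp add: field_simps)
  also have "\<dots> \<le> 4 * (2 * L) * (2 * L / lam) / lam ^ 8"
    using mb lb lampos by (intro divide_right_mono mult_mono) auto
  also have "\<dots> = 16 / lam ^ 3" unfolding L using lampos by (simp add: field_simps power_add[symmetric] eval_nat_numeral)
  also have "\<dots> \<le> 1"
  proof -
    have "lam ^ 3 \<ge> 3 ^ 3" using E4 by (rule power_mono) simp
    then show ?thesis using lampos by (simp add: divide_le_eq)
  qed
  finally show "4 * exp (- real m / l) * real (m * n * l) \<le> 1" .
  have "real (T * l) \<ge> real T * (y - 1)" using lge TpR by (simp add: mult_left_mono)
  also have "real T * (y - 1) = ((1 - eps) * real n - real T) / Q - real T"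
    unfolding y_def using Tmu Qpos by (simp add: field_simps)
  also have "\<dots> \<ge> ((1 - eps) * real n - x) / Q - x"
  proof -
    have "((1 - eps) * real n - x) / Q \<le> ((1 - eps) * real n - real T) / Q"
      using Tle Qpos by (intro divide_right_mono) auto
    then show ?thesis using Tle by linarith
  qed
  finally have "real (T * l) \<ge> ((1 - eps) * real n - x) / Q - x" .
  moreover have "((1 - eps) * real n - x) / Q - x = real n / lam * (((1 - eps) - 1 / L) * lam / Q - lam / L)"
    unfolding x_def using lampos Lpos Qpos by (simp add: field_simps)
  ultimately show "real n / lam * (((1 - eps) - 1 / L) * lam / Q - lam / L) \<le> real (T * l)" by simp
qed



lemma hyper:
  fixes E :: "'i \<Rightarrow> 'v set" and z :: real
  assumes finV: "finite V" and finI: "finite I" and EV: "\<forall>i\<in>I. E i \<subseteq> V"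
    and cE: "\<forall>i\<in>I. card (E i) = n"
    and deg: "\<forall>v\<in>V. card {i\<in>I. v \<in> E i} \<le> n" and n1: "1 \<le> n"
    and T: "T > 0" and z: "0 < z" "z \<le> 1"
    and c1: "4 * (real T * ((real T - 1 + z) / T) ^ n / z ^ m) * real (n * n) \<le> 1"
    and l: "l > 0" and m1: "m \<ge> 1" and c2: "4 * exp (- real m / l) * real (m * n * l) \<le> 1"
  shows "\<exists>col. \<forall>i\<in>I. \<forall>c<T*l. \<exists>v\<in>E i. col v = c"
proof -
  obtain \<sigma> where \<sigma>: "\<sigma> \<in> PiE V (\<lambda>_. {..<T})" "\<forall>i\<in>I. \<forall>g<T. m \<le> card {v\<in>E i. \<sigma> v = g}"
    using stage1[OF finV finI EV cE deg T z order.refl c1 n1] by blast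
  define W where "W i g = (SOME W. W \<subseteq> {v\<in>E i. \<sigma> v = g} \<and> card W = m)" for i g
  have Wp: "\<forall>i\<in>I. \<forall>g<T. W i g \<subseteq> E i \<and> (\<forall>v\<in>W i g. \<sigma> v = g) \<and> card (W i g) = m"
  proof (intro ballI allI impI)
    fix i g assume "i \<in> I" "g < T"
    then have "m \<le> card {v\<in>E i. \<sigma> v = g}" using \<sigma> by auto
    then obtain W0 where "W0 \<subseteq> {v\<in>E i. \<sigma> v = g}" "card W0 = m" by (rule obtain_subset_with_card_n)
    then have "\<exists>W. W \<subseteq> {v\<in>E i. \<sigma> v = g} \<and> card W = m" by blast
    from someI_ex[OF this] show "W i g \<subseteq> E i \<and> (\<forall>v\<in>W i g. \<sigma> v = g) \<and> card (W i g) = m"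
      unfolding W_def by auto
  qed
  have D1: "1 \<le> m * n * l" using m1 n1 l by simp
  obtain \<tau> where \<tau>: "\<forall>i\<in>I. \<forall>g<T. \<forall>j<l. \<exists>v\<in>W i g. \<tau> v = j"
    using stage2[OF finV finI EV deg Wp l order.refl c2 D1] by blast
  define col where "col v = \<sigma> v * l + \<tau> v" for v
  have "\<forall>i\<in>I. \<forall>c<T*l. \<exists>v\<in>E i. col v = c"
  proof (intro ballI allI impI)
    fix i c assume i: "i \<in> I" and c: "c < T * l"
    have g: "c div l < T" using c l by (simp add: less_mult_imp_div_less)
    have j: "c mod l < l" using l by simp
    obtain v where v: "v \<in> W i (c div l)" "\<tau> v = c mod l" using \<tau> i g j by blast
    have "\<sigma> v = c div l" "v \<in> E i" using Wp i g v(1) by auto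
    then have "col v = c" unfolding col_def using v(2) by simp
    then show "\<exists>v\<in>E i. col v = c" using \<open>v \<in> E i\<close> by blast
  qed
  then show ?thesis by blast
qed

lemma p_Zd_ge:
  fixes S :: "(int ^ 'd) set"
  assumes "finite S" and "polychromatic c k S"
  shows "k \<le> p_Zd S"
proof -
  have bnd: "y \<le> card S" if "polychromatic c' y S" for c' y
  proof -
    have "{..<y} \<subseteq> (\<lambda>s. c' (0 + s)) ` S"
    proof
      fix x assume "x \<in> {..<y}"
      moreover have P: "\<forall>n. \<forall>i<y. \<exists>s\<in>S. c' (n + s) = i" using that unfolding polychromatic_def .
      ultimately have "\<exists>s\<in>S. c' (0 + s) = x" using P[rule_format, of x 0] by simp
      then obtain s where "s \<in> S" "c' (0 + s) = x" by blast
      then show "x \<in> (\<lambda>s. c' (0 + s)) ` S" by (metis image_eqI)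
    qed
    then have "card {..<y} \<le> card ((\<lambda>s. c' (0 + s)) ` S)" using assms(1) by (intro card_mono) auto
    also have "\<dots> \<le> card S" by (rule card_image_le[OF assms(1)])
    finally show ?thesis by simp
  qed
  show ?thesis unfolding p_Zd_def
    by (rule Greatest_le_nat[where b="card S"]) (use assms bnd in auto)
qed

lemma torus:
  fixes S :: "(int ^ 'd) set"
  assumes finS: "finite S"
  shows "\<exists>(V :: (int ^ 'd) set) (E :: int ^ 'd \<Rightarrow> (int ^ 'd) set). finite V \<and>
     (\<forall>i\<in>V. E i \<subseteq> V \<and> card (E i) = card S) \<and> (\<forall>v\<in>V. card {i\<in>V. v \<in> E i} \<le> card S) \<and>
     (\<forall>col k. (\<forall>i\<in>V. \<forall>c<k. \<exists>v\<in>E i. col v = c) \<longrightarrow> (\<exists>c. polychromatic c k S))"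
proof -
  define B where "B = (\<Sum>s\<in>S. \<Sum>a\<in>UNIV. \<bar>s $ a\<bar>)"
  define M where "M = 2 * B + 1"
  have sB: "\<bar>s $ a\<bar> \<le> B" if "s \<in> S" for s a
  proof -
    have "\<bar>s $ a\<bar> \<le> (\<Sum>a\<in>UNIV. \<bar>s $ a\<bar>)" by (rule member_le_sum) auto
    also have "\<dots> \<le> B" unfolding B_def
      by (rule member_le_sum[where f="\<lambda>s. \<Sum>a\<in>UNIV. \<bar>s $ a\<bar>"]) (use that finS in \<open>auto intro: sum_nonneg\<close>)
    finally show ?thesis .
  qed
  have B0: "B \<ge> 0" unfolding B_def by (auto intro: sum_nonneg)
  have Mpos: "M > 0" unfolding M_def using B0 by simp
  define \<pi> where "\<pi> x = (\<chi> a. x $ a mod M)" for x :: "int ^ 'd"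
  define V where "V = {v :: int ^ 'd. \<forall>a. 0 \<le> v $ a \<and> v $ a < M}"
  define E where "E u = (\<lambda>s. \<pi> (u + s)) ` S" for u
  have finV: "finite V"
  proof -
    have "V \<subseteq> (\<lambda>f. \<chi> a. f a) ` (PiE UNIV (\<lambda>_. {0..<M}))"
    proof
      fix v assume "v \<in> V"
      then have "(\<lambda>a. v $ a) \<in> PiE UNIV (\<lambda>_. {0..<M})" unfolding V_def by auto
      moreover have "v = (\<chi> a. (\<lambda>a. v $ a) a)" by simp
      ultimately show "v \<in> (\<lambda>f. \<chi> a. f a) ` (PiE UNIV (\<lambda>_. {0..<M}))" by blast
    qed
    moreover have "finite (PiE (UNIV :: 'd set) (\<lambda>_. {0..<M}))" by (intro finite_PiE) auto
    ultimately show ?thesis using finite_subset by blast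
  qed
  have piV: "\<pi> x \<in> V" for x unfolding \<pi>_def V_def using Mpos by auto
  have pi_add: "\<pi> (\<pi> x + s) = \<pi> (x + s)" for x s
    unfolding \<pi>_def by (simp add: vec_eq_iff mod_add_left_eq)
  have inj: "inj_on (\<lambda>s. \<pi> (u + s)) S" for u
  proof
    fix s s' assume s: "s \<in> S" "s' \<in> S" and eq: "\<pi> (u + s) = \<pi> (u + s')"
    show "s = s'"
    proof (rule vec_eq_iff[THEN iffD2], rule allI)
      fix a
      have "(u $ a + s $ a) mod M = (u $ a + s' $ a) mod M"
        using eq unfolding \<pi>_def by (metis vec_lambda_beta vector_add_component)
      then have dv: "M dvd (s $ a - s' $ a)"
        by (metis add_diff_cancel_left mod_eq_dvd_iff)
      have "\<bar>s $ a - s' $ a\<bar> < M" using sB[OF s(1), of a] sB[OF s(2), of a] unfolding M_def by linarith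
      then show "s $ a = s' $ a" using dv dvd_imp_le_int[of "s $ a - s' $ a" M] Mpos by fastforce
    qed
  qed
  have cardE: "card (E u) = card S" for u unfolding E_def by (rule card_image[OF inj])
  have EV: "E u \<subseteq> V" for u unfolding E_def using piV by auto
  have deg: "card {i\<in>V. v \<in> E i} \<le> card S" if "v \<in> V" for v
  proof -
    have "{i\<in>V. v \<in> E i} \<subseteq> (\<lambda>s. \<pi> (v - s)) ` S"
    proof
      fix u assume u: "u \<in> {i\<in>V. v \<in> E i}"
      then obtain s where s: "s \<in> S" "v = \<pi> (u + s)" unfolding E_def by auto
      have "\<pi> (v - s) = u"
      proof -
        have "\<pi> (v - s) $ a = u $ a" for a
        proof -
          have "\<pi> (v - s) $ a = ((u $ a + s $ a) mod M - s $ a) mod M"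
            unfolding s(2) \<pi>_def by simp
          also have "\<dots> = u $ a mod M" by (simp add: mod_diff_left_eq)
          also have "\<dots> = u $ a" using u unfolding V_def by simp
          finally show ?thesis .
        qed
        then show ?thesis by (simp add: vec_eq_iff)
      qed
      then show "u \<in> (\<lambda>s. \<pi> (v - s)) ` S" using s(1) by blast
    qed
    then have "card {i\<in>V. v \<in> E i} \<le> card ((\<lambda>s. \<pi> (v - s)) ` S)"
      using finS by (intro card_mono) auto
    also have "\<dots> \<le> card S" by (rule card_image_le[OF finS])
    finally show ?thesis .
  qed
  have poly: "\<exists>c. polychromatic c k S" if col: "\<forall>i\<in>V. \<forall>c<k. \<exists>v\<in>E i. col v = c" for col k
  proof -
    define c where "c x = col (\<pi> x)" for x
    have "polychromatic c k S" unfolding polychromatic_def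
    proof (intro allI impI)
      fix n i assume i: "i < k"
      obtain v where v: "v \<in> E (\<pi> n)" "col v = i" using col piV i by blast
      then obtain s where s: "s \<in> S" "v = \<pi> (\<pi> n + s)" unfolding E_def by auto
      then have "c (n + s) = i" unfolding c_def using v(2) pi_add by simp
      then show "\<exists>s\<in>S. c (n + s) = i" using s(1) by blast
    qed
    then show ?thesis by blast
  qed
  show ?thesis
    by (rule exI[of _ V], rule exI[of _ E]) (use finV EV cardE deg poly in auto)
qed

theorem theorem19:
  assumes "CARD('d) \<ge> 2"
  shows "\<exists>f :: nat \<Rightarrow> real. f \<longlonglongrightarrow> 0 \<and>
           (\<forall>S :: (int ^ 'd) set. finite S \<longrightarrow>
              real (p_Zd S) \<ge> (1 + f (card S)) * real (card S) / ln (real (card S)))"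
proof -
  define lam where "lam n = ln (real n)" for n :: nat
  define eps where "eps n = lam n powr (-1/4)" for n
  define L where "L n = lam n ^ 3" for n
  define Q where "Q n = lam n + 8 * ln (lam n)" for n
  define T where "T n = nat \<lfloor>real n / L n\<rfloor>" for n
  define m where "m n = nat \<lfloor>(1 - eps n) * (real n / T n)\<rfloor>" for n
  define l where "l n = nat \<lfloor>((1 - eps n) * (real n / T n) - 1) / Q n\<rfloor>" for n
  define G where "G n = ((1 - eps n) - 1 / L n) * lam n / Q n - lam n / L n" for n
  have ev: "eventually (\<lambda>n. n \<ge> 2 \<and> 2 \<le> real n / L n \<and> eps n \<le> 1/2 \<and>
      4 * real n ^ 3 * exp (- (L n * (eps n)\<^sup>2 / 8)) \<le> 1 \<and> 3 \<le> lam n \<and>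
      Q n \<le> (1 - eps n) * L n - 1) sequentially"
    unfolding lam_def eps_def L_def Q_def
    apply (intro eventually_conj)
    apply (rule eventually_ge_at_top)
    apply real_asymp+
    done
  have Glim: "G \<longlonglongrightarrow> 1" unfolding G_def lam_def eps_def L_def Q_def by real_asymp
  obtain N where N: "\<And>n. n \<ge> N \<Longrightarrow> n \<ge> 2 \<and> 2 \<le> real n / L n \<and> eps n \<le> 1/2 \<and>
      4 * real n ^ 3 * exp (- (L n * (eps n)\<^sup>2 / 8)) \<le> 1 \<and> 3 \<le> lam n \<and>
      Q n \<le> (1 - eps n) * L n - 1"
    using ev unfolding eventually_sequentially by blast
  define f where "f n = (if n \<ge> N then min 0 (G n - 1) else -1)" for n
  show ?thesis
  proof (intro exI conjI allI impI)
    have "(\<lambda>n. min 0 (G n - 1)) \<longlonglongrightarrow> min 0 (1 - 1)"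
      by (intro tendsto_min tendsto_const tendsto_diff Glim)
    then have lim: "(\<lambda>n. min 0 (G n - 1)) \<longlonglongrightarrow> 0" by simp
    have "eventually (\<lambda>n. min 0 (G n - 1) = f n) sequentially"
      using eventually_ge_at_top[of N] by eventually_elim (simp add: f_def)
    then show "f \<longlonglongrightarrow> 0" by (rule Lim_transform_eventually[OF lim])
  next
    fix S :: "(int ^ 'd) set" assume finS: "finite S"
    define n where "n = card S"
    show "real (p_Zd S) \<ge> (1 + f (card S)) * real (card S) / ln (real (card S))"
    proof (cases "n \<ge> N")
      case False
      then show ?thesis unfolding n_def f_def by simp
    next
      case True
      note NN = N[OF True]
      have n2: "n \<ge> 2" using NN by simp
      obtain V :: "(int ^ 'd) set" and E where VE: "finite V"
        "\<forall>i\<in>V. E i \<subseteq> V \<and> card (E i) = card S" "\<forall>v\<in>V. card {i\<in>V. v \<in> E i} \<le> card S"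
        "\<forall>col k. (\<forall>i\<in>V. \<forall>c<k. \<exists>v\<in>E i. col v = c) \<longrightarrow> (\<exists>c. polychromatic c k S)"
        using torus[OF finS] by blast
      have EV: "\<forall>i\<in>V. E i \<subseteq> V" and cE: "\<forall>i\<in>V. card (E i) = n" using VE(2) n_def by auto
      have deg: "\<forall>v\<in>V. card {i\<in>V. v \<in> E i} \<le> n" using VE(3) n_def by auto
      note A = analysis[OF n2 lam_def eps_def L_def Q_def T_def m_def l_def]
      have a: "T n > 0" "l n > 0" "m n \<ge> 1" "0 < 1 - eps n / 4" "1 - eps n / 4 \<le> 1"
        "4 * (real (T n) * ((real (T n) - 1 + (1 - eps n / 4)) / T n) ^ n / (1 - eps n / 4) ^ m n) * real (n * n) \<le> 1"
        "4 * exp (- real (m n) / l n) * real (m n * n * l n) \<le> 1"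
        "real n / lam n * G n \<le> real (T n * l n)"
        using A[of] NN unfolding G_def by auto
      have n1: "1 \<le> n" using n2 by simp
      obtain col where "\<forall>i\<in>V. \<forall>c<T n * l n. \<exists>v\<in>E i. col v = c"
        using hyper[OF VE(1) VE(1) EV cE deg n1 a(1) a(4) a(5) a(6) a(2) a(3) a(7)] by blast
      then obtain c where "polychromatic c (T n * l n) S" using VE(4) by blast
      then have pge: "T n * l n \<le> p_Zd S" by (rule p_Zd_ge[OF finS])
      have lam0: "lam n > 0" using NN by simp
      have f1: "1 + f n \<le> G n" unfolding f_def using True by simp
      have "(1 + f n) * real n / lam n \<le> G n * real n / lam n"
        using f1 lam0 by (intro divide_right_mono mult_right_mono) auto
      also have "\<dots> = real n / lam n * G n" by simp
      also have "\<dots> \<le> real (T n * l n)" by (rule a(8))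
      also have "\<dots> \<le> real (p_Zd S)" using pge by (metis of_nat_le_iff)
      finally show ?thesis unfolding n_def lam_def by simp
    qed
  qed
qed


end
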